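(* Let $\Omega$ be a topological space and $\mathsf{F}:\mathcal{B}(\Omega)\to\mathcal{L}(\mathcal{H})$ a sharp observable (projection valued measure). If $\mathsf{F}$ and $\mathsf{E}_{\mathrm{can}}$ are jointly measurable, then $\mathsf{F}$ is trivial: for every $X\in\mathcal{B}(\Omega)$, $\mathsf{F}(X)=c_XI$ with $c_X\in\{0,1\}$.
   Context: $\mathcal{H}\simeq L^2(\mathbb{R})$ with number basis $\{|n\rangle\}_{n\in\mathbb{N}}$. An observable is a normalized POVM on a Borel $\sigma$-algebra. The canonical phase observable is $\mathsf{E}_{\mathrm{can}}(\Theta)=\sum_{m,n=0}^\infty \frac{1}{2\pi}\int_\Theta e^{i(m-n)\theta}\,d\theta\,|m\rangle\langle n|$, $\Theta\in\mathcal{B}([0,2\pi))$. Observables $\mathsf{E}_1:\mathcal{B}(\Omega_1)\to\mathcal{L}(\mathcal{H})$ and $\mathsf{E}_2:\mathcal{B}(\Omega_2)\to\mathcal{L}(\mathcal{H})$ are jointly measurable if there is an observable $\mathsf{E}:\mathcal{B}(\Omega_1\times\Omega_2)\to\mathcal{L}(\mathcal{H})$ with $\mathsf{E}(X\times\Omega_2)=\mathsf{E}_1(X)$ and $\mathsf{E}(\Omega_1\times Y)=\mathsf{E}_2(Y)$ for all $X\in\mathcal{B}(\Omega_1)$, $Y\in\mathcal{B}(\Omega_2)$. *)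

theory Defs
  imports "HOL-Analysis.Analysis"
begin

text \<open>Operators on H = L^2(R), identified with l^2(N) via the number basis |n>,
  are represented by their matrix elements  A m n = <m|A|n>.\<close>

type_synonym opmat = "nat \<Rightarrow> nat \<Rightarrow> complex"

definition idop :: opmat where
  "idop = (\<lambda>m n. if m = n then 1 else 0)"

definition scalar_op :: "complex \<Rightarrow> opmat" where
  "scalar_op c = (\<lambda>m n. if m = n then c else 0)"

definition qform :: "opmat \<Rightarrow> nat \<Rightarrow> (nat \<Rightarrow> complex) \<Rightarrow> complex" where
  "qform A N c = (\<Sum>m<N. \<Sum>n<N. cnj (c m) * A m n * c n)"

text \<open>Effect: a (bounded) operator with 0 <= A <= I, tested on the dense set of
  finitely supported vectors.\<close>
definition effect :: "opmat \<Rightarrow> bool" where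
  "effect A \<longleftrightarrow> (\<forall>N c. Im (qform A N c) = 0 \<and> 0 \<le> Re (qform A N c)
                          \<and> Re (qform A N c) \<le> (\<Sum>n<N. (cmod (c n))\<^sup>2))"

text \<open>Normalized POVM on the measurable space M (sigma-additive in the weak
  operator topology, i.e. matrix-elementwise, which is equivalent for effects).\<close>
definition observable :: "'a measure \<Rightarrow> ('a set \<Rightarrow> opmat) \<Rightarrow> bool" where
  "observable M E \<longleftrightarrow>
     (\<forall>X\<in>sets M. effect (E X)) \<and>
     E (space M) = idop \<and>
     (\<forall>F::nat \<Rightarrow> 'a set. range F \<subseteq> sets M \<longrightarrow> disjoint_family F \<longrightarrow>
        (\<forall>m n. (\<lambda>i. E (F i) m n) sums E (\<Union>i. F i) m n))"

text \<open>Sharp observable: every E(X) is a projection (idempotent; matrix product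
  sum_k A m k * A k n).\<close>
definition sharp :: "'a measure \<Rightarrow> ('a set \<Rightarrow> opmat) \<Rightarrow> bool" where
  "sharp M E \<longleftrightarrow> observable M E \<and>
     (\<forall>X\<in>sets M. \<forall>m n. (\<lambda>k. E X m k * E X k n) sums E X m n)"

definition phase_space :: "real measure" where
  "phase_space = restrict_space borel {0..<2*pi}"

definition E_can :: "real set \<Rightarrow> opmat" where
  "E_can X = (\<lambda>m n. complex_of_real (1 / (2*pi)) *
      (LINT \<theta>:X|lborel. exp (\<i> * of_int (int m - int n) * complex_of_real \<theta>)))"

definition jointly_measurable ::
  "'a::topological_space set \<Rightarrow> ('a set \<Rightarrow> opmat) \<Rightarrow>
   'b::topological_space set \<Rightarrow> ('b set \<Rightarrow> opmat) \<Rightarrow> bool" where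
  "jointly_measurable S1 E1 S2 E2 \<longleftrightarrow>
     (\<exists>E. observable (restrict_space borel (S1 \<times> S2)) E \<and>
        (\<forall>X\<in>sets (restrict_space borel S1). E (X \<times> S2) = E1 X) \<and>
        (\<forall>Y\<in>sets (restrict_space borel S2). E (S1 \<times> Y) = E2 Y))"

end

theory Submission
  imports Defs
begin

lemma const_sums_zero:
  fixes c :: "'a::real_normed_vector"
  assumes "(\<lambda>i::nat. c) sums c" shows "c = 0"
proof -
  have "(\<lambda>i::nat. c) \<longlonglongrightarrow> 0" using summable_LIMSEQ_zero[OF sums_summable[OF assms]] .
  moreover have "(\<lambda>i::nat. c) \<longlonglongrightarrow> c" by simp
  ultimately show ?thesis using LIMSEQ_unique by metis
qed

lemma density_exists:
  fixes \<phi> :: "real set \<Rightarrow> real"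
  assumes nn: "\<And>X. X \<in> sets borel \<Longrightarrow> 0 \<le> \<phi> X"
  and add: "\<And>A. range A \<subseteq> sets borel \<Longrightarrow> disjoint_family A \<Longrightarrow> (\<lambda>i. \<phi> (A i)) sums \<phi> (\<Union>i. A i)"
  and null: "\<And>X. X \<in> null_sets lborel \<Longrightarrow> \<phi> X = 0"
  shows "\<exists>g. g \<in> borel_measurable borel \<and> (\<forall>x. 0 \<le> g x) \<and> integrable lborel g \<and>
     (\<forall>X\<in>sets borel. (LINT x:X|lborel. g x) = \<phi> X)"
proof -
  have e: "\<phi> {} = 0"
    using add[of "\<lambda>_. {}"] by (intro const_sums_zero) (auto simp: disjoint_family_on_def)
  define N where "N = measure_of UNIV (sets borel) (\<lambda>X. ennreal (\<phi> X))"
  have sa: "sigma_algebra UNIV (sets (borel::real measure))"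
    using sets.sigma_algebra_axioms[of "borel::real measure"] by simp
  have pos: "positive (sets borel) (\<lambda>X. ennreal (\<phi> X))"
    by (simp add: positive_def e)
  have ca: "countably_additive (sets borel) (\<lambda>X. ennreal (\<phi> X))"
    unfolding countably_additive_def
  proof (intro allI impI)
    fix A :: "nat \<Rightarrow> real set" assume "range A \<subseteq> sets borel" "disjoint_family A"
    then show "(\<Sum>i. ennreal (\<phi> (A i))) = ennreal (\<phi> (\<Union> (range A)))"
      using add nn by (intro suminf_ennreal_eq) auto
  qed
  have eN: "emeasure N X = ennreal (\<phi> X)" if "X \<in> sets borel" for X
    unfolding N_def using emeasure_measure_of_sigma[OF sa pos ca that] .
  have sN: "sets N = sets borel" unfolding N_def using sigma_algebra.sigma_sets_eq[OF sa] by (simp add: sets_measure_of)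
  have spN: "space N = UNIV" unfolding N_def by (simp add: space_measure_of_conv)
  interpret N: finite_measure N
    by (rule finite_measureI) (simp add: spN eN)
  have ac: "absolutely_continuous lborel N"
    unfolding absolutely_continuous_def
  proof (rule subsetI)
    fix X :: "real set" assume X: "X \<in> null_sets lborel"
    then have "X \<in> sets borel" by auto
    then show "X \<in> null_sets N" using X null eN sN by (auto simp: null_sets_def)
  qed
  have sN': "sets N = sets lborel" using sN by simp
  define g where "g x = enn2real (RN_deriv lborel N x)" for x
  have gm: "g \<in> borel_measurable borel" unfolding g_def by measurable
  have "integrable N (\<lambda>_. 1::real)" by simp
  then have gi: "integrable lborel g"
    using sigma_finite_measure.RN_deriv_integrable[OF sigma_finite_lborel N.sigma_finite_measure_axioms ac sN', of "\<lambda>_. 1::real"]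
    by (simp add: g_def[abs_def])
  have "(LINT x:X|lborel. g x) = \<phi> X" if X: "X \<in> sets borel" for X
  proof -
    have "(LINT x:X|lborel. g x) = integral\<^sup>L N (indicator X :: real \<Rightarrow> real)"
      using sigma_finite_measure.RN_deriv_integral[OF sigma_finite_lborel N.sigma_finite_measure_axioms ac sN', of "indicator X :: real \<Rightarrow> real"] X
      by (simp add: g_def set_lebesgue_integral_def mult.commute)
    also have "\<dots> = measure N X" using X sN by (simp add: N.emeasure_finite)
    also have "\<dots> = \<phi> X" using X eN nn by (simp add: measure_def)
    finally show ?thesis .
  qed
  then show ?thesis using gm gi
    by (intro exI[of _ g]) (auto simp: g_def[abs_def])
qed

lemma AE_nonneg_from_sets:
  fixes g :: "real \<Rightarrow> real"
  assumes gi: "integrable lborel g" and pos: "\<And>X. X \<in> sets borel \<Longrightarrow> 0 \<le> (LINT x:X|lborel. g x)"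
  shows "AE x in lborel. 0 \<le> g x"
proof -
  have gm: "g \<in> borel_measurable borel" using borel_measurable_integrable[OF gi] by simp
  define X where "X = {x. g x < 0}"
  have X: "X \<in> sets borel" unfolding X_def using gm by measurable
  define h where "h x = indicator X x * (- g x)" for x
  have hi: "integrable lborel h" unfolding h_def
    using integrable_mult_indicator[of X lborel "\<lambda>x. - g x"] X gi by simp
  have hn: "AE x in lborel. 0 \<le> h x" by (auto simp: h_def X_def indicator_def)
  have "integral\<^sup>L lborel h = - (LINT x:X|lborel. g x)"
    unfolding h_def set_lebesgue_integral_def by simp
  then have "integral\<^sup>L lborel h \<le> 0" using pos[OF X] by simp
  moreover have "0 \<le> integral\<^sup>L lborel h" using hn by (simp add: integral_nonneg_AE)
  ultimately have "integral\<^sup>L lborel h = 0" by simp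
  then have "AE x in lborel. h x = 0" using integral_nonneg_eq_0_iff_AE[OF hi hn] by simp
  then show ?thesis by eventually_elim (auto simp: h_def X_def indicator_def split: if_splits)
qed

definition vec2 :: "nat \<Rightarrow> nat \<Rightarrow> complex \<Rightarrow> complex \<Rightarrow> nat \<Rightarrow> complex" where
  "vec2 m n \<alpha> \<beta> = (\<lambda>k. if k = m then \<alpha> else if k = n then \<beta> else 0)"

lemma sum_vec2:
  fixes f :: "nat \<Rightarrow> 'b::comm_ring_1"
  assumes "m \<noteq> n" "m < N" "n < N" and that: "g 0 = 0"
  shows "(\<Sum>k<N. f k * g (vec2 m n \<alpha> \<beta> k)) = f m * g \<alpha> + f n * g \<beta>"
    and "(\<Sum>k<N. g (vec2 m n \<alpha> \<beta> k) * f k) = g \<alpha> * f m + g \<beta> * f n"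
proof -
  have eq: "g (vec2 m n \<alpha> \<beta> k) = (if k = m then g \<alpha> else 0) + (if k = n then g \<beta> else 0)" for k
    using assms that by (auto simp: vec2_def)
  show "(\<Sum>k<N. f k * g (vec2 m n \<alpha> \<beta> k)) = f m * g \<alpha> + f n * g \<beta>"
    unfolding eq using assms by (simp add: distrib_left sum.distrib if_distrib[of "\<lambda>x. f _ * x"] cong: if_cong)
  show "(\<Sum>k<N. g (vec2 m n \<alpha> \<beta> k) * f k) = g \<alpha> * f m + g \<beta> * f n"
    unfolding eq using assms by (simp add: distrib_right sum.distrib if_distrib[of "\<lambda>x. x * f _"] cong: if_cong)
qed

lemma qform_vec2:
  assumes "m \<noteq> n" "m < N" "n < N"
  shows "qform A N (vec2 m n \<alpha> \<beta>) = cnj \<alpha> * A m m * \<alpha> + cnj \<alpha> * A m n * \<beta> + cnj \<beta> * A n m * \<alpha> + cnj \<beta> * A n n * \<beta>"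
proof -
  have "qform A N (vec2 m n \<alpha> \<beta>) = (\<Sum>i<N. cnj (vec2 m n \<alpha> \<beta> i) * (A i m * \<alpha> + A i n * \<beta>))"
    unfolding qform_def
    using sum_vec2(1)[OF assms _, where g=id] by (simp add: mult.assoc sum_distrib_left[symmetric])
  also have "\<dots> = cnj \<alpha> * (A m m * \<alpha> + A m n * \<beta>) + cnj \<beta> * (A n m * \<alpha> + A n n * \<beta>)"
    using sum_vec2(2)[OF assms _, where g=cnj] by simp
  finally show ?thesis by (simp add: algebra_simps)
qed

lemma norm_vec2:
  assumes "m \<noteq> n" "m < N" "n < N"
  shows "(\<Sum>k<N. (cmod (vec2 m n \<alpha> \<beta> k))\<^sup>2) = (cmod \<alpha>)\<^sup>2 + (cmod \<beta>)\<^sup>2"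
  using sum_vec2(2)[OF assms _, where g="\<lambda>x. (cmod x)^2" and f="\<lambda>_. 1::real"] by simp

definition rq :: "opmat \<Rightarrow> nat \<Rightarrow> nat \<Rightarrow> complex \<Rightarrow> complex \<Rightarrow> real" where
  "rq A m n \<alpha> \<beta> = (cmod \<alpha>)\<^sup>2 * Re (A m m) + (cmod \<beta>)\<^sup>2 * Re (A n n) + 2 * Re (cnj \<alpha> * \<beta> * A m n)"

lemma effect_facts:
  assumes "effect A" "m \<noteq> n"
  shows "A n m = cnj (A m n)" and "Im (A m m) = 0" and "0 \<le> Re (A m m)"
    and "Re (qform A (Suc (max m n)) (vec2 m n \<alpha> \<beta>)) = rq A m n \<alpha> \<beta>"
    and "0 \<le> rq A m n \<alpha> \<beta>"
proof -
  define N where "N = Suc (max m n)"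
  have mn: "m \<noteq> n" "m < N" "n < N" using assms by (auto simp: N_def)
  have ef: "Im (qform A N c) = 0" "0 \<le> Re (qform A N c)" for c using assms(1) by (auto simp: effect_def)
  note q = qform_vec2[OF mn, of A]
  have 1: "Im (A m m) = 0" using ef(1)[of "vec2 m n 1 0"] q by simp
  have 2: "Im (A n n) = 0" using ef(1)[of "vec2 m n 0 1"] q by simp
  have 3: "Im (A m n) + Im (A n m) = 0" using ef(1)[of "vec2 m n 1 1"] q 1 2 by simp
  have 4: "Re (A m n) - Re (A n m) = 0" using ef(1)[of "vec2 m n 1 \<i>"] q 1 2 by simp
  show h: "A n m = cnj (A m n)" using 3 4 by (simp add: complex_eq_iff)
  show "Im (A m m) = 0" by (fact 1)
  show "0 \<le> Re (A m m)" using ef(2)[of "vec2 m n 1 0"] q by simp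
  have "Re (qform A N (vec2 m n \<alpha> \<beta>)) = rq A m n \<alpha> \<beta>"
  proof -
    have a: "cnj \<alpha> * A m m * \<alpha> = of_real ((cmod \<alpha>)\<^sup>2 * Re (A m m))"
      using 1 by (simp add: complex_eq_iff power2_eq_square cmod_def algebra_simps)
    have b: "cnj \<beta> * A n n * \<beta> = of_real ((cmod \<beta>)\<^sup>2 * Re (A n n))"
      using 2 by (simp add: complex_eq_iff power2_eq_square cmod_def algebra_simps)
    have c: "Re (cnj \<beta> * A n m * \<alpha>) = Re (cnj \<alpha> * \<beta> * A m n)"
      unfolding h by (simp add: algebra_simps)
    have d: "cnj \<alpha> * A m n * \<beta> = cnj \<alpha> * \<beta> * A m n" by (simp add: mult_ac)
    show ?thesis unfolding q rq_def d using c by (simp only: a b plus_complex.sel Re_complex_of_real)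
  qed
  then show "Re (qform A (Suc (max m n)) (vec2 m n \<alpha> \<beta>)) = rq A m n \<alpha> \<beta>" by (simp add: N_def)
  then show "0 \<le> rq A m n \<alpha> \<beta>" using ef(2) by (metis N_def)
qed

lemma toeplitz_projection_trivial:
  fixes P :: opmat
  assumes herm: "\<And>m n. P n m = cnj (P m n)"
    and toe: "\<And>m n. P (Suc m) (Suc n) = P m n"
    and sh: "\<And>n. (\<lambda>k. P n k * P k n) sums P n n"
  shows "\<exists>c\<in>{0, 1}. P = scalar_op c"
proof -
  define q where "q n k = (cmod (P n k))\<^sup>2" for n k
  have pq: "P n k * P k n = of_real (q n k)" for n k
    unfolding q_def herm[of k n] by (simp only: complex_norm_square)
  have qs: "q n sums Re (P n n)" for n
    using sums_Re[OF sh[of n]] unfolding pq by simp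
  have diag: "P n n = P 0 0" for n by (induction n) (simp_all add: toe)
  have tk: "P (i + k) k = P i 0" for i k by (induction k) (simp_all add: toe)
  have col0: "P (Suc j) 0 = 0" for j
  proof -
    have a: "(\<lambda>k. q (Suc j) (Suc k)) sums Re (P 0 0)"
      using qs[of j] by (simp add: q_def[abs_def] toe diag[of j])
    have b: "q (Suc j) sums Re (P 0 0)" using qs[of "Suc j"] diag[of "Suc j"] by simp
    have "q (Suc j) sums (Re (P 0 0) + q (Suc j) 0)" using a by (simp add: sums_Suc_iff)
    then have "Re (P 0 0) + q (Suc j) 0 = Re (P 0 0)" using b sums_unique2 by blast
    then have "q (Suc j) 0 = 0" by simp
    then show ?thesis by (simp add: q_def)
  qed
  have off: "P m n = 0" if "m \<noteq> n" for m n
  proof (cases "n < m")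
    case True
    then obtain j where j: "m = Suc (n + j)" using less_imp_Suc_add by blast
    have "P m n = P (Suc j) 0" using tk[of "Suc j" n] j by (simp add: add.commute)
    then show ?thesis using col0 by simp
  next
    case False
    then have "m < n" using that by simp
    then obtain j where j: "n = Suc (m + j)" using less_imp_Suc_add by blast
    have "P n m = P (Suc j) 0" using tk[of "Suc j" m] j by (simp add: add.commute)
    then show ?thesis using col0 herm[of n m] by simp
  qed
  define c where "c = P 0 0"
  have e: "(\<lambda>k. if k = 0 then q 0 k else 0) = q 0" using off by (auto simp: q_def fun_eq_iff)
  have "q 0 sums q 0 0" using sums_single[of 0 "q 0"] unfolding e .
  then have "q 0 0 = Re (P 0 0)" using qs[of 0] sums_unique2 by blast
  then have r: "Re c = (cmod c)\<^sup>2" by (simp add: c_def q_def)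
  have i: "Im c = 0" using herm[of 0 0] by (simp add: c_def complex_eq_iff)
  then have "Re c = (Re c)\<^sup>2" using r by (simp add: cmod_def)
  then have "Re c = 0 \<or> Re c = 1" by (metis power2_eq_square mult_cancel_right1 mult_zero_left)
  then have "c = 0 \<or> c = 1" using i by (auto simp: complex_eq_iff)
  moreover have "P = scalar_op c"
  proof (intro ext)
    fix m n show "P m n = scalar_op c m n"
      unfolding scalar_op_def c_def using off[of m n] diag[of n] by simp
  qed
  ultimately show ?thesis by auto
qed

definition ww :: "nat \<Rightarrow> nat \<Rightarrow> real \<Rightarrow> complex" where
  "ww m n \<theta> = exp (\<i> * of_int (int m - int n) * complex_of_real \<theta>)"

lemma ww_norm: "cmod (ww m n \<theta>) = 1"
proof -
  have "ww m n \<theta> = exp (\<i> * complex_of_real (real_of_int (int m - int n) * \<theta>))"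
    unfolding ww_def by (simp add: mult_ac)
  then show ?thesis using norm_exp_i_times by simp
qed

lemma ww_diag: "ww m m \<theta> = 1" by (simp add: ww_def)

lemma ww_shift: "ww (Suc m) (Suc n) = ww m n" by (simp add: ww_def fun_eq_iff)

lemma ww_meas: "ww m n \<in> borel_measurable borel"
  unfolding ww_def[abs_def] by (intro borel_measurable_continuous_onI continuous_intros)

lemma ww_cnj: "cnj (ww m n \<theta>) * ww m n \<theta> = 1"
proof -
  have "cnj (ww m n \<theta>) * ww m n \<theta> = of_real ((cmod (ww m n \<theta>))\<^sup>2)" unfolding complex_norm_square by (rule mult.commute)
  then show ?thesis by (simp add: ww_norm)
qed

lemma S_fin: "emeasure lborel {0..<2*pi} < \<infinity>" by simp

lemma set_integrable_S:
  fixes f :: "real \<Rightarrow> 'b::{banach, second_countable_topology}"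
  assumes "T \<in> sets borel" "T \<subseteq> {0..<2*pi}" "f \<in> borel_measurable borel" "\<And>x. norm (f x) \<le> C"
  shows "set_integrable lborel T f"
proof -
  have "emeasure lborel T \<le> emeasure lborel {0..<2*pi}" using assms(1,2) by (intro emeasure_mono) auto
  then have fin: "emeasure lborel T < \<infinity>" using S_fin by (simp add: le_less_trans)
  have "set_integrable lborel T (\<lambda>_. C)"
    unfolding set_integrable_def using integrable_real_indicator[of T lborel] assms(1) fin
    by (intro integrable_scaleR_left) auto
  then show ?thesis
    apply (rule set_integrable_bound)
    using assms by (auto simp: set_borel_measurable_def intro!: borel_measurable_indicator AE_I2 order_trans[OF _ abs_ge_self])
qed

lemma Re_set_integral:
  assumes "set_integrable M A (f :: 'a \<Rightarrow> complex)"
  shows "Re (CLINT x:A|M. f x) = (LINT x:A|M. Re (f x))"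
  using integral_Re[of M "\<lambda>x. indicator A x *\<^sub>R f x"] assms
  by (simp add: set_lebesgue_integral_def set_integrable_def)

definition Wf :: "nat \<Rightarrow> nat \<Rightarrow> complex \<Rightarrow> real \<Rightarrow> real" where
  "Wf m n \<beta> x = indicator {0..<2*pi} x * ((1 + (cmod \<beta>)\<^sup>2 + 2 * Re (\<beta> * ww m n x)) / (2*pi))"

lemma Wf_meas: "Wf m n \<beta> \<in> borel_measurable borel"
  unfolding Wf_def[abs_def] using ww_meas by measurable

lemma Wf_int: "integrable lborel (Wf m n \<beta>)"
proof -
  have "set_integrable lborel {0..<2*pi} (\<lambda>x. (1 + (cmod \<beta>)\<^sup>2 + 2 * Re (\<beta> * ww m n x)) / (2*pi))"
  proof (rule set_integrable_S[where C = "(1 + (cmod \<beta>)\<^sup>2 + 2 * cmod \<beta>) / (2*pi)"])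
    show "(\<lambda>x. (1 + (cmod \<beta>)\<^sup>2 + 2 * Re (\<beta> * ww m n x)) / (2 * pi)) \<in> borel_measurable borel"
      using ww_meas by measurable
    fix x
    have "\<bar>Re (\<beta> * ww m n x)\<bar> \<le> cmod \<beta>"
      using abs_Re_le_cmod[of "\<beta> * ww m n x"] by (simp add: norm_mult ww_norm)
    moreover have "0 \<le> (cmod \<beta> - 1)\<^sup>2" by simp
    ultimately have "\<bar>1 + (cmod \<beta>)\<^sup>2 + 2 * Re (\<beta> * ww m n x)\<bar> \<le> 1 + (cmod \<beta>)\<^sup>2 + 2 * cmod \<beta>"
      by (auto simp: abs_le_iff power2_eq_square algebra_simps)
    then show "norm ((1 + (cmod \<beta>)\<^sup>2 + 2 * Re (\<beta> * ww m n x)) / (2 * pi)) \<le> (1 + (cmod \<beta>)\<^sup>2 + 2 * cmod \<beta>) / (2*pi)"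
      by (simp add: divide_right_mono)
  qed auto
  then show ?thesis by (simp add: set_integrable_def Wf_def[abs_def])
qed

lemma E_rq:
  assumes X: "X \<in> sets borel"
  shows "rq (E_can (X \<inter> {0..<2*pi})) m n 1 \<beta> = (LINT x:X|lborel. Wf m n \<beta> x)"
proof -
  define T where "T = X \<inter> {0..<2*pi}"
  have T: "T \<in> sets borel" "T \<subseteq> {0..<2*pi}" using X by (auto simp: T_def)
  have Ed: "E_can T k l = of_real (1/(2*pi)) * (CLINT \<theta>:T|lborel. ww k l \<theta>)" for k l
    by (simp add: E_can_def ww_def[abs_def])
  have wi: "set_integrable lborel T (ww k l)" for k l
    by (rule set_integrable_S[OF T ww_meas, where C=1]) (simp add: ww_norm)
  define g where "g \<theta> = ww m m \<theta> + of_real ((cmod \<beta>)\<^sup>2) * ww n n \<theta> + 2 * \<beta> * ww m n \<theta>" for \<theta>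
  have gi: "set_integrable lborel T g"
    unfolding g_def by (intro set_integral_add set_integrable_mult_right wi)
  have "rq (E_can T) m n 1 \<beta> = Re (E_can T m m + of_real ((cmod \<beta>)\<^sup>2) * E_can T n n + 2 * \<beta> * E_can T m n)"
    by (simp add: rq_def)
  also have "E_can T m m + of_real ((cmod \<beta>)\<^sup>2) * E_can T n n + 2 * \<beta> * E_can T m n
     = of_real (1/(2*pi)) * (CLINT \<theta>:T|lborel. g \<theta>)"
    unfolding Ed g_def
    by (simp add: set_integral_add set_integrable_mult_right wi set_integral_mult_right algebra_simps)
  also have "Re \<dots> = (1/(2*pi)) * (LINT \<theta>:T|lborel. Re (g \<theta>))"
    using Re_set_integral[OF gi] by simp
  also have "\<dots> = (LINT x:X|lborel. Wf m n \<beta> x)"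
    unfolding set_lebesgue_integral_def T_def Wf_def g_def
    by (simp add: ww_diag indicator_inter_arith integral_mult_right_zero[symmetric] mult_ac)
  finally show ?thesis by (simp add: T_def)
qed

lemma Re_eq_cmod:
  assumes h: "Re z = cmod z" shows "z = of_real (cmod z)"
proof -
  have "(Re z)\<^sup>2 = (Re z)\<^sup>2 + (Im z)\<^sup>2" using h cmod_power2[of z] by simp
  then have "Im z = 0" by simp
  then show ?thesis using h by (simp add: complex_eq_iff)
qed

lemma pointwise_alg:
  fixes a d r s :: real and w :: complex
  assumes w: "cmod w = 1"
    and lo: "\<And>\<beta>. 0 \<le> a + (cmod \<beta>)\<^sup>2 * d + 2 * (Re \<beta> * r - Im \<beta> * s)"
    and hi: "\<And>\<beta>. a + (cmod \<beta>)\<^sup>2 * d + 2 * (Re \<beta> * r - Im \<beta> * s) \<le> (1 + (cmod \<beta>)\<^sup>2 + 2 * Re (\<beta> * w)) / (2*pi)"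
  shows "a = d \<and> Complex r s = of_real a * w"
proof -
  define b where "b = Complex r s"
  have Rb: "Re \<beta> * r - Im \<beta> * s = Re (\<beta> * b)" for \<beta> by (simp add: b_def)
  have lo': "0 \<le> a + (cmod \<beta>)\<^sup>2 * d + 2 * Re (\<beta> * b)" for \<beta> using lo[of \<beta>] Rb by simp
  have "cnj w * w = of_real ((cmod w)\<^sup>2)" unfolding complex_norm_square by (rule mult.commute)
  then have ww1: "cnj w * w = 1" using w by simp
  have "a + d + 2 * Re (- cnj w * b) \<le> 0"
    using hi[of "- cnj w"] Rb[of "- cnj w"] w ww1 by simp
  then have up: "a + d \<le> 2 * Re (cnj w * b)" by simp
  have "Re (cnj w * b) \<le> cmod (cnj w * b)" by (rule complex_Re_le_cmod)
  also have "\<dots> = cmod b" using w by (simp add: norm_mult)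
  finally have Rl: "Re (cnj w * b) \<le> cmod b" .
  have a0: "0 \<le> a" using lo'[of 0] by simp
  have ad: "a = d \<and> cmod b = a"
  proof (cases "b = 0")
    case True
    have "0 \<le> a + d" using lo'[of 1] True by simp
    moreover have "0 \<le> a + 4 * d" using lo'[of 2] True by simp
    ultimately show ?thesis using up True a0 by simp
  next
    case False
    define u where "u = cmod b"
    have u0: "0 < u" using False by (simp add: u_def)
    have lt: "0 \<le> a + t\<^sup>2 * d - 2 * t * u" for t :: real
    proof -
      have cb: "cnj b * b = of_real (u\<^sup>2)" unfolding u_def complex_norm_square by (simp add: mult.commute)
      have "- (of_real t * cnj b / of_real u) * b = - of_real t * (cnj b * b) / of_real u" by simp
      also have "\<dots> = of_real (- t * u)" unfolding cb using u0 by (simp add: power2_eq_square)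
      finally have "Re (- (of_real t * cnj b / of_real u) * b) = - t * u" by simp
      moreover have "cmod (- (of_real t * cnj b / of_real u)) = \<bar>t\<bar> * u / \<bar>u\<bar>"
        by (simp only: norm_minus_cancel norm_divide norm_mult complex_mod_cnj norm_of_real u_def)
      moreover have "\<bar>t\<bar> * u / \<bar>u\<bar> = \<bar>t\<bar>" using u0 by simp
      moreover have "\<bar>t\<bar>\<^sup>2 = t\<^sup>2" by simp
      ultimately show ?thesis using lo'[of "- (of_real t * cnj b / of_real u)"] by (simp only:)
    qed
    have s: "a + d = 2 * u" using lt[of 1] up Rl by (simp add: u_def)
    have d0: "0 < d"
    proof (rule ccontr)
      assume "\<not> 0 < d"
      have "0 \<le> a + 4 * d - 4 * u" using lt[of 2] by simp
      then show False using s a0 u0 \<open>\<not> 0 < d\<close> by simp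
    qed
    have "0 \<le> a + (u/d)\<^sup>2 * d - 2 * (u/d) * u" using lt[of "u/d"] .
    then have "0 \<le> a * d - u\<^sup>2" using d0 by (simp add: field_simps power2_eq_square)
    then have "0 \<le> a * d - ((a+d)/2)\<^sup>2" using s by simp
    then have "(a - d)\<^sup>2 \<le> 0" by (simp add: power2_eq_square field_simps)
    then have "a = d" by simp
    then show ?thesis using s by (simp add: u_def)
  qed
  have "Re (cnj w * b) = cmod (cnj w * b)" using up Rl ad w by (simp add: norm_mult)
  then have "cnj w * b = of_real (cmod (cnj w * b))" by (rule Re_eq_cmod)
  then have "cnj w * b = of_real a" using ad w by (simp add: norm_mult)
  then have "w * (cnj w * b) = of_real a * w" by simp
  then have "b = of_real a * w" using ww1 by (simp add: mult.assoc[symmetric] mult.commute[of w])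
  then show ?thesis using ad by (simp add: b_def)
qed

lemma borel_times:
  fixes A :: "'a::topological_space set" and B :: "'b::topological_space set"
  assumes "A \<in> sets borel" "B \<in> sets borel"
  shows "A \<times> B \<in> sets (borel :: ('a \<times> 'b) measure)"
proof -
  have f: "fst \<in> borel_measurable (borel :: ('a \<times> 'b) measure)"
    by (intro borel_measurable_continuous_onI continuous_intros)
  have s: "snd \<in> borel_measurable (borel :: ('a \<times> 'b) measure)"
    by (intro borel_measurable_continuous_onI continuous_intros)
  have "fst -` A \<inter> space borel \<in> sets (borel :: ('a \<times> 'b) measure)" using measurable_sets[OF f assms(1)] .
  moreover have "snd -` B \<inter> space borel \<in> sets (borel :: ('a \<times> 'b) measure)" using measurable_sets[OF s assms(2)] .
  ultimately have "(fst -` A \<inter> space borel) \<inter> (snd -` B \<inter> space borel) \<in> sets (borel :: ('a \<times> 'b) measure)" by blast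
  moreover have "(fst -` A \<inter> space borel) \<inter> (snd -` B \<inter> space borel) = A \<times> B" by auto
  ultimately show ?thesis by simp
qed

lemma obs_empty:
  assumes "observable M G" shows "G {} k l = 0"
proof -
  have "(\<lambda>i::nat. G {} k l) sums G {} k l"
    using assms unfolding observable_def
    by (auto dest!: spec[of _ "\<lambda>_. {}"] simp: disjoint_family_on_def)
  then show ?thesis by (rule const_sums_zero)
qed

lemma obs_add2:
  assumes o: "observable M G" and A: "A \<in> sets M" and B: "B \<in> sets M" and d: "A \<inter> B = {}"
  shows "G (A \<union> B) k l = G A k l + G B k l"
proof -
  define C where "C i = (if i = (0::nat) then A else if i = 1 then B else {})" for i
  have "range C \<subseteq> sets M" using A B by (auto simp: C_def)
  moreover have "disjoint_family C" using d by (auto simp: disjoint_family_on_def C_def)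
  ultimately have "(\<lambda>i. G (C i) k l) sums G (\<Union>i. C i) k l"
    using o unfolding observable_def by blast
  moreover have "(\<Union>i. C i) = A \<union> B"
    by (auto simp: C_def split: if_splits)
  moreover have "(\<lambda>i. G (C i) k l) sums (\<Sum>i\<in>{0,1}. G (C i) k l)"
    by (rule sums_finite) (auto simp: C_def obs_empty[OF o])
  ultimately show ?thesis by (simp add: C_def sums_iff)
qed

lemma rq_add: "rq (\<lambda>k l. A k l + B k l) m n \<alpha> \<beta> = rq A m n \<alpha> \<beta> + rq B m n \<alpha> \<beta>"
  by (simp add: rq_def algebra_simps)

lemma set_int: "integrable lborel (f::real\<Rightarrow>real) \<Longrightarrow> X \<in> sets borel \<Longrightarrow> set_integrable lborel X f"
  unfolding set_integrable_def using integrable_mult_indicator[of X lborel f] by simp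

lemma compl_borel: "Y \<in> sets borel \<Longrightarrow> - Y \<in> sets borel"
proof -
  assume "Y \<in> sets borel"
  then have "space borel - Y \<in> sets borel" by (rule sets.compl_sets)
  then show ?thesis by (simp add: Compl_eq_Diff_UNIV)
qed

lemma set_null_zero: "X \<in> null_sets lborel \<Longrightarrow> (LINT x:X|lborel. (f x :: real)) = 0"
proof -
  assume X: "X \<in> null_sets lborel"
  have "AE x in lborel. indicator X x *\<^sub>R f x = 0"
    using AE_not_in[OF X] by eventually_elim simp
  then show ?thesis unfolding set_lebesgue_integral_def by (rule integral_eq_zero_AE)
qed

locale jctx =
  fixes G :: "(real \<times> 'a::topological_space) set \<Rightarrow> opmat"
  assumes obs: "observable (restrict_space borel ({0..<2*pi} \<times> (UNIV::'a set))) G"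
    and m1: "\<And>X. X \<in> sets (restrict_space borel {0..<2*pi}) \<Longrightarrow> G (X \<times> UNIV) = E_can X"
begin

definition H :: "'a set \<Rightarrow> real set \<Rightarrow> opmat" where "H Y X = G ((X \<inter> {0..<2*pi}) \<times> Y)"

lemma sH:
  assumes "X \<in> sets borel" "Y \<in> sets borel"
  shows "(X \<inter> {0..<2*pi}) \<times> Y \<in> sets (restrict_space borel ({0..<2*pi} \<times> (UNIV::'a set)))"
proof -
  have "{0..<2*pi} \<times> (UNIV::'a set) \<in> sets borel" by (intro borel_times) auto
  moreover have "(X \<inter> {0..<2*pi}) \<times> Y \<in> sets borel" using assms by (intro borel_times) auto
  ultimately show ?thesis by (subst sets_restrict_space_iff) auto
qed

lemma effH: "X \<in> sets borel \<Longrightarrow> Y \<in> sets borel \<Longrightarrow> effect (H Y X)"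
  using obs sH unfolding observable_def H_def by blast

lemma addH:
  assumes A: "range A \<subseteq> sets borel" "disjoint_family A" and Y: "Y \<in> sets borel"
  shows "(\<lambda>i. H Y (A i) k l) sums H Y (\<Union>i. A i) k l"
proof -
  define B where "B i = (A i \<inter> {0..<2*pi}) \<times> Y" for i
  have "range B \<subseteq> sets (restrict_space borel ({0..<2*pi} \<times> (UNIV::'a set)))"
    using A Y sH by (auto simp: B_def)
  moreover have "disjoint_family B" using A(2) by (auto simp: disjoint_family_on_def B_def)
  ultimately have "(\<lambda>i. G (B i) k l) sums G (\<Union>i. B i) k l" using obs unfolding observable_def by blast
  moreover have "(\<Union>i. B i) = ((\<Union>i. A i) \<inter> {0..<2*pi}) \<times> Y" by (auto simp: B_def)
  ultimately show ?thesis by (simp add: H_def B_def)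
qed

lemma compH:
  assumes X: "X \<in> sets borel" and Y: "Y \<in> sets borel"
  shows "(\<lambda>k l. H Y X k l + H (- Y) X k l) = E_can (X \<inter> {0..<2*pi})"
proof -
  have "G ((X \<inter> {0..<2*pi}) \<times> Y \<union> (X \<inter> {0..<2*pi}) \<times> (- Y)) k l = H Y X k l + H (- Y) X k l" for k l
    unfolding H_def using sH[OF X Y] sH[OF X compl_borel[OF Y]]
    by (intro obs_add2[OF obs]) auto
  moreover have "(X \<inter> {0..<2*pi}) \<times> Y \<union> (X \<inter> {0..<2*pi}) \<times> (- Y) = (X \<inter> {0..<2*pi}) \<times> UNIV" by auto
  moreover have "X \<inter> {0..<2*pi} \<in> sets (restrict_space borel {0..<2*pi})"
    using X by (subst sets_restrict_space_iff) auto
  ultimately show ?thesis using m1 by (auto simp: fun_eq_iff)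
qed

lemma rqH_nonneg: "m \<noteq> n \<Longrightarrow> X \<in> sets borel \<Longrightarrow> Y \<in> sets borel \<Longrightarrow> 0 \<le> rq (H Y X) m n \<alpha> \<beta>"
  using effect_facts(5) effH by blast

lemma rqH_le:
  assumes "m \<noteq> n" "X \<in> sets borel" "Y \<in> sets borel"
  shows "rq (H Y X) m n 1 \<beta> \<le> (LINT x:X|lborel. Wf m n \<beta> x)"
proof -
  have "rq (H Y X) m n 1 \<beta> + rq (H (- Y) X) m n 1 \<beta> = (LINT x:X|lborel. Wf m n \<beta> x)"
    using rq_add[of "H Y X" "H (- Y) X" m n 1 \<beta>] compH[OF assms(2,3)] E_rq[OF assms(2)] by simp
  moreover have "0 \<le> rq (H (- Y) X) m n 1 \<beta>" using rqH_nonneg assms compl_borel by blast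
  ultimately show ?thesis by simp
qed

lemma rqH_sums:
  assumes A: "range A \<subseteq> sets borel" "disjoint_family A" and Y: "Y \<in> sets borel"
  shows "(\<lambda>i. rq (H Y (A i)) m n \<alpha> \<beta>) sums rq (H Y (\<Union>i. A i)) m n \<alpha> \<beta>"
  unfolding rq_def
  by (intro sums_add sums_mult sums_Re addH[OF A Y] sums_mult[where c="cnj \<alpha> * \<beta>", OF addH[OF A Y]])

lemma rqH_null:
  assumes "m \<noteq> n" "X \<in> null_sets lborel" "Y \<in> sets borel"
  shows "rq (H Y X) m n 1 \<beta> = 0"
proof -
  have X: "X \<in> sets borel" using assms(2) by auto
  show ?thesis using rqH_le[OF assms(1) X assms(3), of \<beta>] rqH_nonneg[OF assms(1) X assms(3), of 1 \<beta>]
      set_null_zero[OF assms(2)] by simp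
qed

definition dens :: "'a set \<Rightarrow> nat \<Rightarrow> nat \<Rightarrow> complex \<Rightarrow> real \<Rightarrow> real" where
  "dens Y m n \<beta> = (SOME g. g \<in> borel_measurable borel \<and> (\<forall>x. 0 \<le> g x) \<and> integrable lborel g \<and>
     (\<forall>X\<in>sets borel. (LINT x:X|lborel. g x) = rq (H Y X) m n 1 \<beta>))"

lemma dens:
  assumes "m \<noteq> n" "Y \<in> sets borel"
  shows "dens Y m n \<beta> \<in> borel_measurable borel" "integrable lborel (dens Y m n \<beta>)"
    "\<And>X. X \<in> sets borel \<Longrightarrow> (LINT x:X|lborel. dens Y m n \<beta> x) = rq (H Y X) m n 1 \<beta>"
proof -
  have "\<exists>g. g \<in> borel_measurable borel \<and> (\<forall>x. 0 \<le> g x) \<and> integrable lborel g \<and>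
     (\<forall>X\<in>sets borel. (LINT x:X|lborel. g x) = rq (H Y X) m n 1 \<beta>)"
    by (rule density_exists) (use assms rqH_nonneg rqH_sums rqH_null in auto)
  then have "dens Y m n \<beta> \<in> borel_measurable borel \<and> (\<forall>x. 0 \<le> dens Y m n \<beta> x) \<and> integrable lborel (dens Y m n \<beta>) \<and>
     (\<forall>X\<in>sets borel. (LINT x:X|lborel. dens Y m n \<beta> x) = rq (H Y X) m n 1 \<beta>)"
    unfolding dens_def by (rule someI_ex)
  then show "dens Y m n \<beta> \<in> borel_measurable borel" "integrable lborel (dens Y m n \<beta>)"
    "\<And>X. X \<in> sets borel \<Longrightarrow> (LINT x:X|lborel. dens Y m n \<beta> x) = rq (H Y X) m n 1 \<beta>" by auto
qed

end


context jctx begin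

definition Am :: "'a set \<Rightarrow> nat \<Rightarrow> real \<Rightarrow> real" where "Am Y m = dens Y m (Suc m) 0"
definition rr :: "'a set \<Rightarrow> nat \<Rightarrow> nat \<Rightarrow> real \<Rightarrow> real" where
  "rr Y m n x = (dens Y m n 1 x - Am Y m x - Am Y n x) / 2"
definition ss :: "'a set \<Rightarrow> nat \<Rightarrow> nat \<Rightarrow> real \<Rightarrow> real" where
  "ss Y m n x = (Am Y m x + Am Y n x - dens Y m n \<i> x) / 2"
definition Df :: "'a set \<Rightarrow> nat \<Rightarrow> nat \<Rightarrow> complex \<Rightarrow> real \<Rightarrow> real" where
  "Df Y m n \<beta> x = Am Y m x + (cmod \<beta>)\<^sup>2 * Am Y n x + 2 * (Re \<beta> * rr Y m n x - Im \<beta> * ss Y m n x)"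

lemma Am: assumes "Y \<in> sets borel"
  shows "Am Y m \<in> borel_measurable borel" "integrable lborel (Am Y m)"
    "\<And>X. X \<in> sets borel \<Longrightarrow> (LINT x:X|lborel. Am Y m x) = Re (H Y X m m)"
  using dens[of m "Suc m" Y, where \<beta>=0] assms by (auto simp: Am_def rq_def)

lemma rr: assumes "m \<noteq> n" "Y \<in> sets borel"
  shows "integrable lborel (rr Y m n)"
    "\<And>X. X \<in> sets borel \<Longrightarrow> (LINT x:X|lborel. rr Y m n x) = Re (H Y X m n)"
proof -
  note d = dens[OF assms, where \<beta>=1] and a = Am[OF assms(2)]
  show "integrable lborel (rr Y m n)" unfolding rr_def[abs_def] using d a by auto
  fix X :: "real set" assume X: "X \<in> sets borel"
  have "(LINT x:X|lborel. rr Y m n x) = ((LINT x:X|lborel. dens Y m n 1 x) - (LINT x:X|lborel. Am Y m x) - (LINT x:X|lborel. Am Y n x)) / 2"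
    unfolding rr_def using X d a
    by (simp add: set_integral_diff set_int set_integral_divide_zero[symmetric])
  also have "\<dots> = Re (H Y X m n)" using X d a by (simp add: rq_def)
  finally show "(LINT x:X|lborel. rr Y m n x) = Re (H Y X m n)" .
qed


lemma ss: assumes "m \<noteq> n" "Y \<in> sets borel"
  shows "integrable lborel (ss Y m n)"
    "\<And>X. X \<in> sets borel \<Longrightarrow> (LINT x:X|lborel. ss Y m n x) = Im (H Y X m n)"
proof -
  note d = dens[OF assms, where \<beta>=\<i>] and a = Am[OF assms(2)]
  show "integrable lborel (ss Y m n)" unfolding ss_def[abs_def] using d a by auto
  fix X :: "real set" assume X: "X \<in> sets borel"
  have "(LINT x:X|lborel. ss Y m n x) = ((LINT x:X|lborel. Am Y m x) + (LINT x:X|lborel. Am Y n x) - (LINT x:X|lborel. dens Y m n \<i> x)) / 2"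
    unfolding ss_def using X d a
    by (simp add: set_integral_diff set_integral_add set_int set_integral_divide_zero[symmetric])
  also have "\<dots> = Im (H Y X m n)" using X d a by (simp add: rq_def)
  finally show "(LINT x:X|lborel. ss Y m n x) = Im (H Y X m n)" .
qed

lemma Df: assumes "m \<noteq> n" "Y \<in> sets borel"
  shows "integrable lborel (Df Y m n \<beta>)"
    "\<And>X. X \<in> sets borel \<Longrightarrow> (LINT x:X|lborel. Df Y m n \<beta> x) = rq (H Y X) m n 1 \<beta>"
proof -
  note r = rr[OF assms] and s = ss[OF assms] and a = Am[OF assms(2)]
  show "integrable lborel (Df Y m n \<beta>)" unfolding Df_def[abs_def] using r s a by auto
  fix X :: "real set" assume X: "X \<in> sets borel"
  have "(LINT x:X|lborel. Df Y m n \<beta> x) = (LINT x:X|lborel. Am Y m x) + (cmod \<beta>)\<^sup>2 * (LINT x:X|lborel. Am Y n x)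
     + 2 * (Re \<beta> * (LINT x:X|lborel. rr Y m n x) - Im \<beta> * (LINT x:X|lborel. ss Y m n x))"
    unfolding Df_def using X r s a
    by (simp add: set_integral_diff set_integral_add set_int set_integral_mult_right)
  also have "\<dots> = rq (H Y X) m n 1 \<beta>" using X r s a by (simp add: rq_def)
  finally show "(LINT x:X|lborel. Df Y m n \<beta> x) = rq (H Y X) m n 1 \<beta>" .
qed

lemma pair:
  assumes mn: "m \<noteq> n" and Y: "Y \<in> sets borel"
  shows "AE x in lborel. x \<in> {0..<2*pi} \<longrightarrow> Am Y m x = Am Y n x \<and>
           Complex (rr Y m n x) (ss Y m n x) = of_real (Am Y m x) * ww m n x"
proof -
  obtain D :: "complex set" where D: "countable D" and Dd: "\<And>U. open U \<Longrightarrow> U \<noteq> {} \<Longrightarrow> \<exists>d\<in>D. d \<in> U"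
    using countable_dense_setE by blast
  have lo: "AE x in lborel. 0 \<le> Df Y m n \<beta> x" for \<beta>
    by (rule AE_nonneg_from_sets[OF Df(1)[OF mn Y]]) (simp add: Df(2)[OF mn Y] rqH_nonneg[OF mn _ Y])
  have hi: "AE x in lborel. 0 \<le> Wf m n \<beta> x - Df Y m n \<beta> x" for \<beta>
  proof (rule AE_nonneg_from_sets)
    show "integrable lborel (\<lambda>x. Wf m n \<beta> x - Df Y m n \<beta> x)" using Wf_int Df(1)[OF mn Y] by auto
    fix X :: "real set" assume X: "X \<in> sets borel"
    have "(LINT x:X|lborel. Wf m n \<beta> x - Df Y m n \<beta> x) = (LINT x:X|lborel. Wf m n \<beta> x) - rq (H Y X) m n 1 \<beta>"
      using X Wf_int Df[OF mn Y] by (simp add: set_integral_diff set_int)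
    then show "0 \<le> (LINT x:X|lborel. Wf m n \<beta> x - Df Y m n \<beta> x)" using rqH_le[OF mn X Y] by simp
  qed
  have "AE x in lborel. \<forall>\<beta>\<in>D. 0 \<le> Df Y m n \<beta> x \<and> 0 \<le> Wf m n \<beta> x - Df Y m n \<beta> x"
    using D lo hi by (subst AE_ball_countable) auto
  then show ?thesis
  proof eventually_elim
    case (elim x)
    show ?case
    proof
      assume xS: "x \<in> {0..<2*pi}"
      define C where "C = {\<beta>. 0 \<le> Df Y m n \<beta> x \<and> 0 \<le> Wf m n \<beta> x - Df Y m n \<beta> x}"
      have "closed C" unfolding C_def Df_def Wf_def
        by (intro closed_Collect_conj closed_Collect_le continuous_intros) auto
      have all: "\<beta> \<in> C" for \<beta>
      proof (rule ccontr)
        assume "\<beta> \<notin> C"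
        then have "open (- C)" "- C \<noteq> {}" using \<open>closed C\<close> by auto
        then obtain d where "d \<in> D" "d \<in> - C" using Dd by blast
        then show False using elim by (auto simp: C_def)
      qed
      show "Am Y m x = Am Y n x \<and> Complex (rr Y m n x) (ss Y m n x) = of_real (Am Y m x) * ww m n x"
      proof (rule pointwise_alg[OF ww_norm])
        fix \<beta> show "0 \<le> Am Y m x + (cmod \<beta>)\<^sup>2 * Am Y n x + 2 * (Re \<beta> * rr Y m n x - Im \<beta> * ss Y m n x)"
          using all[of \<beta>] by (simp add: C_def Df_def)
        show "Am Y m x + (cmod \<beta>)\<^sup>2 * Am Y n x + 2 * (Re \<beta> * rr Y m n x - Im \<beta> * ss Y m n x)
           \<le> (1 + (cmod \<beta>)\<^sup>2 + 2 * Re (\<beta> * ww m n x)) / (2 * pi)"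
          using all[of \<beta>] xS by (simp add: C_def Df_def Wf_def)
      qed
    qed
  qed
qed


lemma toeplitz:
  assumes Y: "Y \<in> sets borel"
  shows "H Y {0..<2*pi} (Suc m) (Suc n) = H Y {0..<2*pi} m n"
proof -
  have S: "{0..<2*pi} \<in> sets (borel :: real measure)" by simp
  have AEm: "AE x in lborel. x \<in> {0..<2*pi} \<longrightarrow> Am Y m x = Am Y (Suc m) x" for m
    using pair[of m "Suc m", OF _ Y] by (auto elim!: eventually_mono)
  show ?thesis
  proof (cases "m = n")
    case True
    have "Re (H Y {0..<2*pi} (Suc m) (Suc m)) = (LINT x:{0..<2*pi}|lborel. Am Y (Suc m) x)"
      using Am(3)[OF Y S] by simp
    also have "\<dots> = (LINT x:{0..<2*pi}|lborel. Am Y m x)"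
      using AEm[of m] Am(1)[OF Y] by (intro set_lebesgue_integral_cong_AE) (auto elim!: eventually_mono)
    also have "\<dots> = Re (H Y {0..<2*pi} m m)" using Am(3)[OF Y S] by simp
    finally have "Re (H Y {0..<2*pi} (Suc m) (Suc m)) = Re (H Y {0..<2*pi} m m)" .
    moreover have "Im (H Y {0..<2*pi} (Suc m) (Suc m)) = 0"
      using effect_facts(2)[OF effH[OF S Y], of "Suc m" m] by simp
    moreover have "Im (H Y {0..<2*pi} m m) = 0"
      using effect_facts(2)[OF effH[OF S Y], of m "Suc m"] by simp
    ultimately show ?thesis using True by (simp add: complex_eq_iff)
  next
    case False
    have mn: "Suc m \<noteq> Suc n" using False by simp
    have "AE x in lborel. x \<in> {0..<2*pi} \<longrightarrow> Complex (rr Y (Suc m) (Suc n) x) (ss Y (Suc m) (Suc n) x) = Complex (rr Y m n x) (ss Y m n x)"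
      using pair[OF mn Y] pair[OF False Y] AEm[of m] by eventually_elim (auto simp: ww_shift)
    then have AEr: "AE x in lborel. x \<in> {0..<2*pi} \<longrightarrow> rr Y (Suc m) (Suc n) x = rr Y m n x \<and> ss Y (Suc m) (Suc n) x = ss Y m n x"
      by eventually_elim simp
    have "Re (H Y {0..<2*pi} (Suc m) (Suc n)) = (LINT x:{0..<2*pi}|lborel. rr Y (Suc m) (Suc n) x)"
      using rr(2)[OF mn Y S] by simp
    also have "\<dots> = (LINT x:{0..<2*pi}|lborel. rr Y m n x)"
      using AEr borel_measurable_integrable[OF rr(1)[OF mn Y]] borel_measurable_integrable[OF rr(1)[OF False Y]]
      by (intro set_lebesgue_integral_cong_AE) (auto elim!: eventually_mono)
    also have "\<dots> = Re (H Y {0..<2*pi} m n)" using rr(2)[OF False Y S] by simp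
    finally have 1: "Re (H Y {0..<2*pi} (Suc m) (Suc n)) = Re (H Y {0..<2*pi} m n)" .
    have "Im (H Y {0..<2*pi} (Suc m) (Suc n)) = (LINT x:{0..<2*pi}|lborel. ss Y (Suc m) (Suc n) x)"
      using ss(2)[OF mn Y S] by simp
    also have "\<dots> = (LINT x:{0..<2*pi}|lborel. ss Y m n x)"
      using AEr borel_measurable_integrable[OF ss(1)[OF mn Y]] borel_measurable_integrable[OF ss(1)[OF False Y]]
      by (intro set_lebesgue_integral_cong_AE) (auto elim!: eventually_mono)
    also have "\<dots> = Im (H Y {0..<2*pi} m n)" using ss(2)[OF False Y S] by simp
    finally have 2: "Im (H Y {0..<2*pi} (Suc m) (Suc n)) = Im (H Y {0..<2*pi} m n)" .
    show ?thesis using 1 2 by (simp add: complex_eq_iff)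
  qed
qed

end


theorem mainTheorem2:
  fixes F :: "'a::topological_space set \<Rightarrow> opmat"
  assumes "sharp borel F"
    and "jointly_measurable {0..<2*pi} E_can (UNIV :: 'a set) F"
  shows "\<forall>X\<in>sets borel. \<exists>c\<in>{0, 1}. F X = scalar_op c"
proof
  fix Y :: "'a set" assume Y: "Y \<in> sets borel"
  obtain G where obs: "observable (restrict_space borel ({0..<2*pi} \<times> (UNIV::'a set))) G"
    and m1: "\<forall>X\<in>sets (restrict_space borel {0..<2*pi}). G (X \<times> UNIV) = E_can X"
    and m2: "\<forall>Y\<in>sets (restrict_space borel (UNIV::'a set)). G ({0..<2*pi} \<times> Y) = F Y"
    using assms(2) unfolding jointly_measurable_def by blast
  interpret jctx G using obs m1 by unfold_locales auto
  have Yr: "Y \<in> sets (restrict_space borel (UNIV::'a set))" using Y by (subst sets_restrict_space_iff) auto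
  have FH: "F Y = H Y {0..<2*pi}" using m2 Yr by (simp add: H_def)
  have eff: "effect (F Y)" and sh: "\<And>m n. (\<lambda>k. F Y m k * F Y k n) sums F Y m n"
    using assms(1) Y unfolding sharp_def observable_def by auto
  show "\<exists>c\<in>{0, 1}. F Y = scalar_op c"
  proof (rule toeplitz_projection_trivial)
    fix m n show "F Y n m = cnj (F Y m n)"
    proof (cases "m = n")
      case True
      then show ?thesis using effect_facts(2)[OF eff, of m "Suc m"] by (simp add: complex_eq_iff)
    next
      case False
      show ?thesis by (rule effect_facts(1)[OF eff False])
    qed
    show "F Y (Suc m) (Suc n) = F Y m n" unfolding FH by (rule toeplitz[OF Y])
    show "(\<lambda>k. F Y n k * F Y k n) sums F Y n n" by (rule sh)
  qed
qed

end
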